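(* Let $\mathbf{h}_1,\mathbf{h}_2\in\mathbb{C}^M$ be linearly independent, $P,\sigma^2>0$, $\rho=\|\mathbf{h}_1\|^2/\|\mathbf{h}_2\|^2$, and $\varphi\in(0,\pi/2]$ the Hermitian angle defined by $\cos\varphi=\frac{|\mathbf{h}_1^H\mathbf{h}_2|}{\|\mathbf{h}_1\|\|\mathbf{h}_2\|}$. Let $\nu(\rho,\varphi)=10\log_{10}\frac{\mathrm{SNR}_{\rm md}}{\mathrm{SNR}_{\rm zf}}$. Then: (1) if $0<\rho\le1$ and $0\le\cos\varphi\le\sqrt\rho$: $\nu=10\log_{10}\frac{1+\rho}{1+\rho-2\sqrt\rho\cos\varphi}$; (2) if $0<\rho\le1$ and $\sqrt\rho<\cos\varphi<1$: $\nu=10\log_{10}\frac{1+\rho}{1-\cos^2\varphi}$; (3) if $\rho>1$ and $0\le\cos\varphi\le1/\sqrt\rho$: $\nu=10\log_{10}\frac{1+\rho}{1+\rho-2\sqrt\rho\cos\varphi}$; (4) if $\rho>1$ and $1/\sqrt\rho<\cos\varphi<1$: $\nu=10\log_{10}\frac{1+1/\rho}{1-\cos^2\varphi}$.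
   Context: With $\mathbf{H}=[\mathbf{h}_1\ \mathbf{h}_2]$ and $\mu_1,\mu_2$ the eigenvalues of $\mathbf{H}^H\mathbf{H}$: $\mathrm{SNR}_{\rm zf}=\frac{P}{\sigma^2\sum_{i=1}^2[(\mathbf{H}^H\mathbf{H})^{-1}]_{i,i}}=\frac{P\mu_1\mu_2}{\sigma^2(\mu_1+\mu_2)}$, and $\mathrm{SNR}_{\rm md}=\frac{1}{\sigma^2}\max_{\mathbf{w}\in\mathbb{C}^M,\ \|\mathbf{w}\|^2=P}\min\{|\mathbf{h}_1^H\mathbf{w}|^2,|\mathbf{h}_2^H\mathbf{w}|^2\}$. *)

theory Defs
  imports "HOL-Analysis.Analysis"
begin

text \<open>Hermitian inner product h^H w on C^M (vectors complex ^ 'm, M = CARD('m)).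
  The library norm on complex ^ 'm is the Euclidean (L2) norm.\<close>
definition cinner :: "complex ^ 'm \<Rightarrow> complex ^ 'm \<Rightarrow> complex" where
  "cinner h w = (\<Sum>i\<in>UNIV. cnj (h $ i) * w $ i)"

definition clin_indep2 :: "complex ^ 'm \<Rightarrow> complex ^ 'm \<Rightarrow> bool" where
  "clin_indep2 h1 h2 \<longleftrightarrow> (\<forall>a b :: complex. a *s h1 + b *s h2 = 0 \<longrightarrow> a = 0 \<and> b = 0)"

text \<open>Columns of H = [h1 h2] and the Gram matrix H^H H (2 x 2).\<close>
definition col2 :: "complex ^ 'm \<Rightarrow> complex ^ 'm \<Rightarrow> 2 \<Rightarrow> complex ^ 'm" where
  "col2 h1 h2 i = (if i = 1 then h1 else h2)"

definition gram2 :: "complex ^ 'm \<Rightarrow> complex ^ 'm \<Rightarrow> complex ^ 2 ^ 2" where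
  "gram2 h1 h2 = (\<chi> i j. cinner (col2 h1 h2 i) (col2 h1 h2 j))"

definition SNR_zf :: "real \<Rightarrow> real \<Rightarrow> complex ^ 'm \<Rightarrow> complex ^ 'm \<Rightarrow> real" where
  "SNR_zf P \<sigma>2 h1 h2 =
     P / (\<sigma>2 * Re (\<Sum>i\<in>UNIV. matrix_inv (gram2 h1 h2) $ i $ i))"

definition SNR_md :: "real \<Rightarrow> real \<Rightarrow> complex ^ 'm \<Rightarrow> complex ^ 'm \<Rightarrow> real" where
  "SNR_md P \<sigma>2 h1 h2 =
     (1 / \<sigma>2) * Sup {min ((cmod (cinner h1 w))\<^sup>2) ((cmod (cinner h2 w))\<^sup>2) | w. (norm w)\<^sup>2 = P}"

definition herm_angle :: "complex ^ 'm \<Rightarrow> complex ^ 'm \<Rightarrow> real" where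
  "herm_angle h1 h2 = arccos (cmod (cinner h1 h2) / (norm h1 * norm h2))"

definition nu_gap :: "real \<Rightarrow> real \<Rightarrow> complex ^ 'm \<Rightarrow> complex ^ 'm \<Rightarrow> real" where
  "nu_gap P \<sigma>2 h1 h2 = 10 * log 10 (SNR_md P \<sigma>2 h1 h2 / SNR_zf P \<sigma>2 h1 h2)"

end

theory Submission
  imports Defs
begin

lemma cinner_self: "cinner u u = complex_of_real ((norm u)\<^sup>2)"
proof -
  have "(norm u)\<^sup>2 = (\<Sum>i\<in>UNIV. (cmod (u$i))\<^sup>2)"
    by (simp add: norm_vec_def L2_set_def sum_nonneg)
  have t: "\<And>i. cnj (u$i) * u$i = complex_of_real ((cmod (u$i))\<^sup>2)"
    by (metis complex_norm_square mult.commute)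
  show ?thesis unfolding cinner_def \<open>(norm u)\<^sup>2 = _\<close> of_real_sum
    by (rule sum.cong) (auto simp: t)
qed

lemma cinner_lin_right: "cinner h (\<alpha> *s u + \<beta> *s v) = \<alpha> * cinner h u + \<beta> * cinner h v"
  unfolding cinner_def by (simp add: sum_distrib_left sum.distrib algebra_simps)

lemma cinner_lin_left: "cinner (\<alpha> *s u + \<beta> *s v) w = cnj \<alpha> * cinner u w + cnj \<beta> * cinner v w"
  unfolding cinner_def by (simp add: sum_distrib_left sum.distrib algebra_simps)

lemma cinner_swap: "cinner v u = cnj (cinner u v)"
  unfolding cinner_def by (simp add: mult.commute)

lemma cinner_CS: "cmod (cinner z w) \<le> norm z * norm w"
proof -
  have "cmod (cinner z w) \<le> (\<Sum>i\<in>UNIV. cmod (z$i) * cmod (w$i))"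
    unfolding cinner_def by (rule order_trans[OF norm_sum]) (simp add: norm_mult)
  also have "\<dots> = (\<chi> i. cmod (z$i)) \<bullet> (\<chi> i. cmod (w$i))"
    by (simp add: inner_vec_def)
  also have "\<dots> \<le> norm (\<chi> i. cmod (z$i)) * norm (\<chi> i. cmod (w$i))"
    by (rule norm_cauchy_schwarz)
  also have "\<dots> = norm z * norm w"
    by (simp add: norm_vec_def)
  finally show ?thesis .
qed

lemma key_ident2:
  fixes a b :: real and g x y :: complex
  shows "cnj (of_real b * x - g*y) * x + cnj (of_real a * y - cnj g * x) * y = of_real (b*(cmod x)\<^sup>2 + a*(cmod y)\<^sup>2 - 2*Re(g*cnj x*y))"
  unfolding cmod_power2 by (simp add: complex_eq_iff algebra_simps power2_eq_square)

lemma key_ident1: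
  fixes a b :: real and g x y :: complex
  shows "Re (cnj (of_real b * x - g*y) * ((of_real b * x - g*y) * of_real a + (of_real a * y - cnj g * x) * g) + cnj (of_real a * y - cnj g * x) * ((of_real b * x - g*y) * cnj g + (of_real a * y - cnj g * x) * of_real b))
     = (a*b - (cmod g)\<^sup>2) * (b*(cmod x)\<^sup>2 + a*(cmod y)\<^sup>2 - 2*Re(g*cnj x*y))"
  unfolding cmod_power2 by (simp add: power2_eq_square; algebra)

lemma det_ident:
  fixes a b :: real and g :: complex
  shows "Re (cnj (-g) * ((-g) * of_real a + of_real a * g) + cnj (of_real a) * ((-g) * cnj g + of_real a * of_real b))
     = a * (a*b - (cmod g)\<^sup>2)"
  unfolding cmod_power2 by (simp add: power2_eq_square; algebra)

lemma bal_ident: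
  fixes a b c k :: real and u :: complex
  assumes "Re u ^2 + Im u ^2 = 1"
  shows "of_real (k*(b-c)) * of_real a + (of_real (k*(a-c)) * u) * (of_real c * cnj u) = of_real (k*(a*b-c^2))"
    and "of_real (k*(b-c)) * cnj (of_real c * cnj u) + (of_real (k*(a-c)) * u) * of_real b = of_real (k*(a*b-c^2)) * u"
    and "Re (cnj (of_real (k*(b-c))) * (of_real (k*(b-c)) * of_real a + (of_real (k*(a-c)) * u) * (of_real c * cnj u)) + cnj (of_real (k*(a-c)) * u) * (of_real (k*(b-c)) * cnj (of_real c * cnj u) + (of_real (k*(a-c)) * u) * of_real b))
       = k^2 * (a*b-c^2) * (a+b-2*c)"
proof -
  show "of_real (k*(b-c)) * of_real a + (of_real (k*(a-c)) * u) * (of_real c * cnj u) = of_real (k*(a*b-c^2))"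
    using assms by (simp add: complex_eq_iff power2_eq_square; algebra)
  show "of_real (k*(b-c)) * cnj (of_real c * cnj u) + (of_real (k*(a-c)) * u) * of_real b = of_real (k*(a*b-c^2)) * u"
    by (simp add: algebra_simps power2_eq_square)
  show "Re (cnj (of_real (k*(b-c))) * (of_real (k*(b-c)) * of_real a + (of_real (k*(a-c)) * u) * (of_real c * cnj u)) + cnj (of_real (k*(a-c)) * u) * (of_real (k*(b-c)) * cnj (of_real c * cnj u) + (of_real (k*(a-c)) * u) * of_real b))
       = k^2 * (a*b-c^2) * (a+b-2*c)"
    using assms by (simp add: complex_eq_iff power2_eq_square; algebra)
qed

lemma matrix_inv_eqI:
  fixes A :: "'a::comm_ring_1^'n^'n"
  assumes "A ** B = mat 1" "B ** A = mat 1"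
  shows "matrix_inv A = B"
proof -
  have ex: "\<exists>A'. A ** A' = mat 1 \<and> A' ** A = mat 1" using assms by blast
  let ?C = "matrix_inv A"
  have C: "A ** ?C = mat 1 \<and> ?C ** A = mat 1"
    unfolding matrix_inv_def by (rule someI_ex[OF ex])
  have "?C = ?C ** (A ** B)" using assms by (simp add: matrix_mul_rid)
  also have "\<dots> = (?C ** A) ** B" by (simp add: matrix_mul_assoc)
  also have "\<dots> = B" using C by (simp add: matrix_mul_lid)
  finally show ?thesis .
qed

lemma trace_inv2:
  fixes A :: "complex^2^2"
  assumes d: "A$1$1*A$2$2 - A$1$2*A$2$1 \<noteq> 0"
  shows "(\<Sum>i\<in>UNIV. matrix_inv A $ i $ i) = (A$1$1 + A$2$2) / (A$1$1*A$2$2 - A$1$2*A$2$1)"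
proof -
  define d where "d = A$1$1*A$2$2 - A$1$2*A$2$1"
  define B :: "complex^2^2" where "B = (\<chi> i j. if i = 1 \<and> j = 1 then A$2$2/d else if i = 1 \<and> j = 2 then - A$1$2/d
     else if i = 2 \<and> j = 1 then - A$2$1/d else A$1$1/d)"
  have dn: "d \<noteq> 0" using d d_def by simp
  have B11: "B$1$1 = A$2$2/d" and B12: "B$1$2 = - A$1$2/d" and B21: "B$2$1 = - A$2$1/d" and B22: "B$2$2 = A$1$1/d"
    by (simp_all add: B_def)
  have "A ** B = mat 1"
    unfolding vec_eq_iff forall_2 matrix_matrix_mult_def mat_def
    using dn by (simp add: sum_2 B11 B12 B21 B22 field_simps; simp add: d_def algebra_simps)
  moreover have "B ** A = mat 1"
    unfolding vec_eq_iff forall_2 matrix_matrix_mult_def mat_def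
    using dn by (simp add: sum_2 B11 B12 B21 B22 field_simps; simp add: d_def algebra_simps)
  ultimately have "matrix_inv A = B" by (rule matrix_inv_eqI)
  then show ?thesis by (simp add: sum_2 B11 B22 d_def[symmetric] add_divide_distrib)
qed
lemma r_bal:
  fixes n1 n2 a b c P s D :: real
  assumes "n1 > 0" "n2 > 0" "a = n1^2" "b = n2^2" "a+b-2*c > 0" "P > 0" "s > 0" "D > 0"
  shows "(P*D/(a+b-2*c)/s) / (P*D/(s*(a+b))) = (1 + a/b)/(1 + a/b - 2*(n1/n2)*(c/(n1*n2)))"
proof -
  have b0: "b > 0" using assms by simp
  have e1: "2*(n1/n2)*(c/(n1*n2)) = 2*(c/b)" using assms by (simp add: power2_eq_square)
  have e2: "1 + a/b - 2*(c/b) = (a+b-2*c)/b" using b0 by (simp add: field_simps)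
  have e3: "1 + a/b = (a+b)/b" using b0 by (simp add: field_simps)
  have a0: "a > 0" using assms by simp
  have "(P*D/(a+b-2*c)/s) / (P*D/(s*(a+b))) = (a+b)/(a+b-2*c)"
  proof -
    have gen: "\<And>x E F. x \<noteq> 0 \<Longrightarrow> E \<noteq> 0 \<Longrightarrow> F \<noteq> 0 \<Longrightarrow> x/E/s / (x/(s*F)) = F/E"
      using assms(7) by (simp add: field_simps)
    show ?thesis by (rule gen) (use assms a0 b0 in auto)
  qed
  also have "\<dots> = ((a+b)/b)/((a+b-2*c)/b)" using b0 by simp
  also have "\<dots> = (1 + a/b)/(1 + a/b - 2*(n1/n2)*(c/(n1*n2)))"
    by (subst e1, subst e2, subst e3) (rule refl)
  finally show ?thesis .
qed

lemma r_one:
  fixes n1 n2 a b c P s D :: real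
  assumes "n1 > 0" "n2 > 0" "a = n1^2" "b = n2^2" "D = a*b - c^2" "P > 0" "s > 0" "D > 0"
  shows "(P*a/s) / (P*D/(s*(a+b))) = (1 + a/b)/(1 - (c/(n1*n2))^2)"
proof -
  have a0: "a > 0" and b0: "b > 0" using assms by simp_all
  have e1: "(c/(n1*n2))^2 = c^2/(a*b)" using assms by (simp add: power_divide power_mult_distrib)
  have e2: "1 - c^2/(a*b) = D/(a*b)" using a0 b0 assms(5) by (simp add: field_simps)
  have e3: "1 + a/b = (a+b)/b" using b0 by (simp add: field_simps)
  have "(P*a/s) / (P*D/(s*(a+b))) = a*(a+b)/D"
    using assms by (simp add: field_simps)
  also have "\<dots> = ((a+b)/b)/(D/(a*b))" using a0 b0 assms by (simp add: field_simps)
  also have "\<dots> = (1 + a/b)/(1 - (c/(n1*n2))^2)"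
    by (subst e1, subst e2, subst e3) (rule refl)
  finally show ?thesis .
qed
lemma quad_bound:
  fixes a b c r m1 m2 :: real
  assumes "0 \<le> c" "c \<le> a" "c \<le> b" "0 \<le> r" "r \<le> m1" "r \<le> m2"
  shows "r^2*(a+b-2*c) \<le> b*m1^2 + a*m2^2 - 2*c * m1 * m2"
proof -
  define p where "p = m1 - r"
  define q where "q = m2 - r"
  have m1: "m1 = r + p" and m2: "m2 = r + q" by (simp_all add: p_def q_def)
  have p: "p \<ge> 0" and q: "q \<ge> 0" using assms by (simp_all add: p_def q_def)
  have "b*m1^2 + a*m2^2 - 2*c * m1 * m2 - r^2*(a+b-2*c)
     = 2*r*p*(b-c) + 2*r*q*(a-c) + (b-c)*p^2 + (a-c)*q^2 + c*(p-q)^2"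
    unfolding m1 m2 by (simp add: algebra_simps power2_eq_square)
  moreover have "0 \<le> 2*r*p*(b-c) + 2*r*q*(a-c) + (b-c)*p^2 + (a-c)*q^2 + c*(p-q)^2"
    using assms p q by (intro add_nonneg_nonneg mult_nonneg_nonneg) auto
  ultimately show ?thesis by linarith
qed

theorem corollary3:
  fixes h1 h2 :: "complex ^ 'm" and P \<sigma>2 \<rho> \<phi> :: real
  assumes indep: "clin_indep2 h1 h2"
    and P: "P > 0" and \<sigma>: "\<sigma>2 > 0"
    and rho: "\<rho> = (norm h1)\<^sup>2 / (norm h2)\<^sup>2"
    and phi: "\<phi> = herm_angle h1 h2"
  shows "(0 < \<rho> \<and> \<rho> \<le> 1 \<and> 0 \<le> cos \<phi> \<and> cos \<phi> \<le> sqrt \<rho> \<longrightarrow>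
           nu_gap P \<sigma>2 h1 h2 = 10 * log 10 ((1 + \<rho>) / (1 + \<rho> - 2 * sqrt \<rho> * cos \<phi>)))
       \<and> (0 < \<rho> \<and> \<rho> \<le> 1 \<and> sqrt \<rho> < cos \<phi> \<and> cos \<phi> < 1 \<longrightarrow>
           nu_gap P \<sigma>2 h1 h2 = 10 * log 10 ((1 + \<rho>) / (1 - (cos \<phi>)\<^sup>2)))
       \<and> (\<rho> > 1 \<and> 0 \<le> cos \<phi> \<and> cos \<phi> \<le> 1 / sqrt \<rho> \<longrightarrow>
           nu_gap P \<sigma>2 h1 h2 = 10 * log 10 ((1 + \<rho>) / (1 + \<rho> - 2 * sqrt \<rho> * cos \<phi>)))
       \<and> (\<rho> > 1 \<and> 1 / sqrt \<rho> < cos \<phi> \<and> cos \<phi> < 1 \<longrightarrow>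
           nu_gap P \<sigma>2 h1 h2 = 10 * log 10 ((1 + 1 / \<rho>) / (1 - (cos \<phi>)\<^sup>2)))"
proof -
  define n1 where "n1 = norm h1"
  define n2 where "n2 = norm h2"
  define a where "a = n1^2"
  define b where "b = n2^2"
  define g where "g = cinner h1 h2"
  define c where "c = cmod g"
  define D where "D = a*b - c^2"
  define N where "N = (\<lambda>\<alpha> \<beta>. Re (cnj \<alpha> * (\<alpha> * of_real a + \<beta> * g) + cnj \<beta> * (\<alpha> * cnj g + \<beta> * of_real b)))"
  have A1: "cinner h1 h1 = of_real a" using cinner_self a_def n1_def by simp
  have B2: "cinner h2 h2 = of_real b" using cinner_self b_def n2_def by simp
  have G21: "cinner h2 h1 = cnj g" using cinner_swap g_def by simp
  have comb1: "cinner h1 (\<alpha> *s h1 + \<beta> *s h2) = \<alpha> * of_real a + \<beta> * g" for \<alpha> \<beta>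
    by (simp add: cinner_lin_right A1 g_def)
  have comb2: "cinner h2 (\<alpha> *s h1 + \<beta> *s h2) = \<alpha> * cnj g + \<beta> * of_real b" for \<alpha> \<beta>
    by (simp add: cinner_lin_right B2 G21)
  have combn: "(norm (\<alpha> *s h1 + \<beta> *s h2))^2 = N \<alpha> \<beta>" for \<alpha> \<beta>
  proof -
    have "complex_of_real ((norm (\<alpha> *s h1 + \<beta> *s h2))^2) = cinner (\<alpha> *s h1 + \<beta> *s h2) (\<alpha> *s h1 + \<beta> *s h2)"
      by (simp add: cinner_self)
    also have "\<dots> = cnj \<alpha> * (\<alpha> * of_real a + \<beta> * g) + cnj \<beta> * (\<alpha> * cnj g + \<beta> * of_real b)"
      unfolding cinner_lin_left comb1 comb2 by simp
    finally show ?thesis unfolding N_def by (metis Re_complex_of_real)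
  qed
  have CS2: "(cmod (cnj \<alpha> * cinner h1 w + cnj \<beta> * cinner h2 w))^2 \<le> N \<alpha> \<beta> * (norm w)^2" for \<alpha> \<beta> w
  proof -
    have "cmod (cinner (\<alpha> *s h1 + \<beta> *s h2) w) \<le> norm (\<alpha> *s h1 + \<beta> *s h2) * norm w"
      by (rule cinner_CS)
    then have "(cmod (cinner (\<alpha> *s h1 + \<beta> *s h2) w))^2 \<le> (norm (\<alpha> *s h1 + \<beta> *s h2) * norm w)^2"
      by (intro power_mono) auto
    then show ?thesis unfolding cinner_lin_left power_mult_distrib combn .
  qed
  have h1nz: "h1 \<noteq> 0"
  proof
    assume "h1 = 0"
    then have "(1::complex) *s h1 + 0 *s h2 = 0" by simp
    with indep show False unfolding clin_indep2_def by (metis zero_neq_one)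
  qed
  have h2nz: "h2 \<noteq> 0"
  proof
    assume "h2 = 0"
    then have "(0::complex) *s h1 + 1 *s h2 = 0" by simp
    with indep show False unfolding clin_indep2_def by (metis zero_neq_one)
  qed
  have n1p: "n1 > 0" and n2p: "n2 > 0" using h1nz h2nz n1_def n2_def by auto
  have ap: "a > 0" and bp: "b > 0" using n1p n2p a_def b_def by auto
  have c0: "c \<ge> 0" unfolding c_def by simp
  have Dp: "D > 0"
  proof -
    have "(-g) *s h1 + complex_of_real a *s h2 \<noteq> 0"
    proof
      assume "(-g) *s h1 + complex_of_real a *s h2 = 0"
      with indep have "complex_of_real a = 0" unfolding clin_indep2_def by blast
      with ap show False by simp
    qed
    then have "(norm ((-g) *s h1 + complex_of_real a *s h2))^2 > 0" by simp
    then have "a * (a*b - (cmod g)\<^sup>2) > 0" unfolding combn N_def det_ident .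
    with ap show ?thesis unfolding D_def c_def by (simp add: zero_less_mult_iff)
  qed
  have abc: "a + b - 2*c > 0"
  proof -
    have "c^2 < a*b" using Dp D_def by simp
    moreover have "4*(a*b) \<le> (a+b)^2"
    proof -
      have "(a+b)^2 - 4*(a*b) = (a-b)^2" by (simp add: power2_eq_square algebra_simps)
      then show ?thesis using zero_le_power2[of "a-b"] by linarith
    qed
    ultimately have "(2*c)^2 < (a+b)^2" by (simp add: power_mult_distrib)
    then have "2*c < a+b" using ap bp by (smt (verit) power_mono)
    then show ?thesis by simp
  qed
  have zf: "SNR_zf P \<sigma>2 h1 h2 = P * D / (\<sigma>2 * (a+b))"
  proof -
    have G: "gram2 h1 h2 $ 1 $ 1 = of_real a" "gram2 h1 h2 $ 1 $ 2 = g"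
      "gram2 h1 h2 $ 2 $ 1 = cnj g" "gram2 h1 h2 $ 2 $ 2 = of_real b"
      by (simp_all add: gram2_def col2_def A1 B2 G21 g_def)
    have gg: "g * cnj g = of_real (c^2)" unfolding c_def by (metis complex_norm_square)
    have dd: "of_real a * of_real b - g * cnj g = complex_of_real D"
      unfolding gg D_def by simp
    have Dn: "complex_of_real D \<noteq> 0" using Dp by simp
    have "(\<Sum>i\<in>UNIV. matrix_inv (gram2 h1 h2) $ i $ i) = complex_of_real ((a+b)/D)"
      using trace_inv2[of "gram2 h1 h2"] Dn unfolding G dd by simp
    then have "Re (\<Sum>i\<in>UNIV. matrix_inv (gram2 h1 h2) $ i $ i) = (a+b)/D"
      by (simp only: Re_complex_of_real)
    then show ?thesis unfolding SNR_zf_def using Dp abc by (simp only:) (simp add: field_simps)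
  qed
  have ub1: "(cmod (cinner h1 w))^2 \<le> P * a" if "(norm w)^2 = P" for w
    using CS2[where \<alpha>=1 and \<beta>=0 and w=w] that by (simp add: N_def mult.commute)
  have ub2: "(cmod (cinner h2 w))^2 \<le> P * b" if "(norm w)^2 = P" for w
    using CS2[where \<alpha>=0 and \<beta>=1 and w=w] that by (simp add: N_def mult.commute)
  have ubQ: "b*(cmod (cinner h1 w))^2 + a*(cmod (cinner h2 w))^2 - 2*c*cmod (cinner h1 w)*cmod (cinner h2 w) \<le> D * P"
    if "(norm w)^2 = P" for w
  proof -
    define x where "x = cinner h1 w"
    define y where "y = cinner h2 w"
    define Q where "Q = b*(cmod x)\<^sup>2 + a*(cmod y)\<^sup>2 - 2*Re(g*cnj x*y)"
    have "(cmod (complex_of_real Q))^2 \<le> D * Q * P"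
      using CS2[where \<alpha>="of_real b * x - g*y" and \<beta>="of_real a * y - cnj g * x" and w=w] that
      unfolding key_ident2 N_def key_ident1 x_def[symmetric] y_def[symmetric] Q_def D_def c_def
      by simp
    then have QQ: "Q * Q \<le> (D * P) * Q" by (simp add: power2_eq_square mult_ac)
    have QP: "Q \<le> D * P"
    proof (cases "Q > 0")
      case True then show ?thesis using QQ by (simp add: mult_le_cancel_right)
    next
      case False then show ?thesis using Dp P by (smt (verit) mult_pos_pos)
    qed
    have "Re (g*cnj x*y) \<le> c * cmod x * cmod y"
      using complex_Re_le_cmod[of "g*cnj x*y"] unfolding c_def by (simp add: norm_mult)
    then show ?thesis using QP unfolding Q_def x_def y_def by linarith
  qed
  have Sup_eq: "SNR_md P \<sigma>2 h1 h2 = V / \<sigma>2"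
    if mem: "\<exists>w. (norm w)^2 = P \<and> min ((cmod (cinner h1 w))\<^sup>2) ((cmod (cinner h2 w))\<^sup>2) = V"
    and bnd: "\<And>w. (norm w)^2 = P \<Longrightarrow> min ((cmod (cinner h1 w))\<^sup>2) ((cmod (cinner h2 w))\<^sup>2) \<le> V"
    for V
  proof -
    let ?S = "{min ((cmod (cinner h1 w))\<^sup>2) ((cmod (cinner h2 w))\<^sup>2) | w. (norm w)\<^sup>2 = P}"
    have "Sup ?S = V"
      by (rule cSup_eq_maximum) (use mem bnd in auto)
    then show ?thesis unfolding SNR_md_def by simp
  qed
  have md_bal: "SNR_md P \<sigma>2 h1 h2 = P * D / (a+b-2*c) / \<sigma>2" if ca: "c \<le> a" and cb: "c \<le> b"
  proof (rule Sup_eq)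
    fix w :: "complex^'m" assume w: "(norm w)^2 = P"
    define m1 where "m1 = cmod (cinner h1 w)"
    define m2 where "m2 = cmod (cinner h2 w)"
    define r where "r = min m1 m2"
    have "r^2*(a+b-2*c) \<le> b*m1^2 + a*m2^2 - 2*c * m1 * m2"
      by (rule quad_bound) (use c0 ca cb in \<open>auto simp: r_def m1_def m2_def\<close>)
    also have "\<dots> \<le> D * P" using ubQ[OF w] unfolding m1_def m2_def by simp
    finally have "r^2 \<le> P * D / (a+b-2*c)" using abc by (simp add: pos_le_divide_eq mult.commute)
    moreover have "min (m1^2) (m2^2) = r^2" unfolding r_def m1_def m2_def
      by (simp add: min_def power_mono)
    ultimately show "min ((cmod (cinner h1 w))\<^sup>2) ((cmod (cinner h2 w))\<^sup>2) \<le> P * D / (a+b-2*c)"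
      unfolding m1_def m2_def by simp
  next
    obtain u :: complex where u1: "Re u ^2 + Im u ^2 = 1" and gu: "g = of_real c * cnj u"
    proof (cases "g = 0")
      case True then show ?thesis using that[of 1] c_def by simp
    next
      case False
      then have cn: "c \<noteq> 0" using c_def by simp
      have "cmod (cnj g / of_real c) = 1" using cn c_def by (simp add: norm_divide)
      then have "Re (cnj g / of_real c) ^2 + Im (cnj g / of_real c) ^2 = 1"
        by (metis cmod_power2 power_one)
      moreover have "g = of_real c * cnj (cnj g / of_real c)" using cn by simp
      ultimately show ?thesis by (rule that)
    qed
    have cu: "cmod u = 1" using u1 by (simp add: cmod_def)
    define k where "k = sqrt (P / (D * (a+b-2*c)))"
    have k0: "k \<ge> 0" unfolding k_def using P Dp abc by simp
    have k2: "k^2 = P / (D * (a+b-2*c))" unfolding k_def using P Dp abc by simp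
    define w where "w = complex_of_real (k*(b-c)) *s h1 + (complex_of_real (k*(a-c)) * u) *s h2"
    have x: "cinner h1 w = of_real (k*(a*b-c^2))"
      unfolding w_def comb1 by (subst gu) (rule bal_ident(1)[OF u1])
    have y: "cinner h2 w = of_real (k*(a*b-c^2)) * u"
      unfolding w_def comb2 by (subst gu) (rule bal_ident(2)[OF u1])
    have nw: "(norm w)^2 = k^2 * (a*b-c^2) * (a+b-2*c)"
      unfolding w_def combn N_def by (subst gu)+ (rule bal_ident(3)[OF u1])
    have "(norm w)^2 = P" unfolding nw k2 D_def[symmetric] using Dp abc by simp
    moreover have "min ((cmod (cinner h1 w))\<^sup>2) ((cmod (cinner h2 w))\<^sup>2) = P * D / (a+b-2*c)"
    proof -
      have "(cmod (cinner h1 w))\<^sup>2 = k^2 * D^2" "(cmod (cinner h2 w))\<^sup>2 = k^2 * D^2"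
        unfolding x y D_def[symmetric] norm_mult norm_of_real cu by (simp_all add: power_mult_distrib)
      then show ?thesis unfolding k2 using Dp abc by (simp add: power2_eq_square)
    qed
    ultimately show "\<exists>w. (norm w)^2 = P \<and> min ((cmod (cinner h1 w))\<^sup>2) ((cmod (cinner h2 w))\<^sup>2) = P * D / (a+b-2*c)"
      by blast
  qed
  have md_1: "SNR_md P \<sigma>2 h1 h2 = P * a / \<sigma>2" if ac: "a \<le> c"
  proof (rule Sup_eq)
    fix w :: "complex^'m" assume w: "(norm w)^2 = P"
    show "min ((cmod (cinner h1 w))\<^sup>2) ((cmod (cinner h2 w))\<^sup>2) \<le> P * a"
      using ub1[OF w] by simp
  next
    define k where "k = sqrt (P / a)"
    have k2: "k^2 = P / a" unfolding k_def using P ap by simp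
    have kk: "k * (k * a) = P" using k2 ap by (simp add: power2_eq_square field_simps)
    have kab: "\<bar>k\<bar> = k" unfolding k_def using P ap bp by simp
    define w where "w = complex_of_real k *s h1 + 0 *s h2"
    have "(norm w)^2 = P" unfolding w_def combn N_def using ap
      by (simp add: kk kab)
    moreover have "(cmod (cinner h1 w))\<^sup>2 = P * a" unfolding w_def comb1 using ap
      by (simp add: norm_mult power_mult_distrib k2 power2_eq_square kab kk)
    moreover have "(cmod (cinner h2 w))\<^sup>2 = P / a * c^2" unfolding w_def comb2 c_def
      by (simp add: norm_mult power_mult_distrib k2 kab)
    moreover have "P * a \<le> P / a * c^2"
    proof -
      have "a^2 \<le> c^2" using ac ap by (intro power_mono) auto
      then show ?thesis using ap P by (simp add: field_simps power2_eq_square)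
    qed
    ultimately show "\<exists>w. (norm w)^2 = P \<and> min ((cmod (cinner h1 w))\<^sup>2) ((cmod (cinner h2 w))\<^sup>2) = P * a"
      by (intro exI[of _ w]) simp
  qed
  have md_2: "SNR_md P \<sigma>2 h1 h2 = P * b / \<sigma>2" if bc: "b \<le> c"
  proof (rule Sup_eq)
    fix w :: "complex^'m" assume w: "(norm w)^2 = P"
    show "min ((cmod (cinner h1 w))\<^sup>2) ((cmod (cinner h2 w))\<^sup>2) \<le> P * b"
      using ub2[OF w] by simp
  next
    define k where "k = sqrt (P / b)"
    have k2: "k^2 = P / b" unfolding k_def using P bp by simp
    have kk: "k * (k * b) = P" using k2 bp by (simp add: power2_eq_square field_simps)
    have kab: "\<bar>k\<bar> = k" unfolding k_def using P ap bp by simp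
    define w where "w = 0 *s h1 + complex_of_real k *s h2"
    have "(norm w)^2 = P" unfolding w_def combn N_def using bp
      by (simp add: kk kab)
    moreover have "(cmod (cinner h2 w))\<^sup>2 = P * b" unfolding w_def comb2 using bp
      by (simp add: norm_mult power_mult_distrib k2 power2_eq_square kab kk)
    moreover have "(cmod (cinner h1 w))\<^sup>2 = P / b * c^2" unfolding w_def comb1 c_def
      by (simp add: norm_mult power_mult_distrib k2 kab)
    moreover have "P * b \<le> P / b * c^2"
    proof -
      have "b^2 \<le> c^2" using bc bp by (intro power_mono) auto
      then show ?thesis using bp P by (simp add: field_simps power2_eq_square)
    qed
    ultimately show "\<exists>w. (norm w)^2 = P \<and> min ((cmod (cinner h1 w))\<^sup>2) ((cmod (cinner h2 w))\<^sup>2) = P * b"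
      by (intro exI[of _ w]) simp
  qed
  have ab_n: "a*b = (n1*n2)^2" unfolding a_def b_def by (simp add: power_mult_distrib)
  have cn: "c < n1*n2"
  proof -
    have "c^2 < (n1*n2)^2" using Dp unfolding D_def ab_n by linarith
    moreover have "0 \<le> n1*n2" using n1p n2p by simp
    ultimately show ?thesis by (rule power2_less_imp_less)
  qed
  have cosphi: "cos \<phi> = c/(n1*n2)"
  proof -
    have "\<phi> = arccos (c/(n1*n2))" unfolding phi herm_angle_def c_def g_def n1_def n2_def ..
    moreover have "0 \<le> c/(n1*n2)" using c0 n1p n2p by simp
    moreover have "c/(n1*n2) \<le> 1" using cn n1p n2p by simp
    ultimately show ?thesis by simp
  qed
  have rhoab: "\<rho> = a/b" using rho a_def b_def n1_def n2_def by simp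
  have sq: "sqrt \<rho> = n1/n2" unfolding rhoab a_def b_def using n1p n2p
    by (simp add: real_sqrt_divide)
  have ratio: "10 * log 10 (SNR_md P \<sigma>2 h1 h2 / SNR_zf P \<sigma>2 h1 h2) = 10 * log 10 X"
    if "SNR_md P \<sigma>2 h1 h2 / SNR_zf P \<sigma>2 h1 h2 = X" for X using that by simp
  show ?thesis unfolding nu_gap_def
  proof (intro conjI impI)
    assume h: "0 < \<rho> \<and> \<rho> \<le> 1 \<and> 0 \<le> cos \<phi> \<and> cos \<phi> \<le> sqrt \<rho>"
    have ca: "c \<le> a" using h n1p n2p unfolding cosphi sq a_def by (simp add: field_simps power2_eq_square)
    have "a \<le> b" using h bp unfolding rhoab by (simp add: field_simps)
    then have cb: "c \<le> b" using ca by simp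
    show "10 * log 10 (SNR_md P \<sigma>2 h1 h2 / SNR_zf P \<sigma>2 h1 h2) = 10 * log 10 ((1 + \<rho>) / (1 + \<rho> - 2 * sqrt \<rho> * cos \<phi>))"
      apply (rule ratio)
      apply (unfold md_bal[OF ca cb] zf sq)
      apply (unfold rhoab cosphi)
      apply (rule r_bal)
      using P \<sigma> Dp abc n1p n2p a_def b_def by auto
  next
    assume h: "0 < \<rho> \<and> \<rho> \<le> 1 \<and> sqrt \<rho> < cos \<phi> \<and> cos \<phi> < 1"
    have ac: "a \<le> c" using h n1p n2p unfolding cosphi sq a_def by (simp add: field_simps power2_eq_square)
    show "10 * log 10 (SNR_md P \<sigma>2 h1 h2 / SNR_zf P \<sigma>2 h1 h2) = 10 * log 10 ((1 + \<rho>) / (1 - (cos \<phi>)\<^sup>2))"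
      apply (rule ratio)
      apply (unfold md_1[OF ac] zf rhoab cosphi)
      apply (rule r_one)
      using P \<sigma> Dp abc n1p n2p a_def b_def D_def by auto
  next
    assume h: "\<rho> > 1 \<and> 0 \<le> cos \<phi> \<and> cos \<phi> \<le> 1 / sqrt \<rho>"
    have cb: "c \<le> b" using h n1p n2p unfolding cosphi sq b_def by (simp add: field_simps power2_eq_square)
    have "b \<le> a" using h bp unfolding rhoab by (simp add: field_simps)
    then have ca: "c \<le> a" using cb by simp
    show "10 * log 10 (SNR_md P \<sigma>2 h1 h2 / SNR_zf P \<sigma>2 h1 h2) = 10 * log 10 ((1 + \<rho>) / (1 + \<rho> - 2 * sqrt \<rho> * cos \<phi>))"
      apply (rule ratio)
      apply (unfold md_bal[OF ca cb] zf sq)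
      apply (unfold rhoab cosphi)
      apply (rule r_bal)
      using P \<sigma> Dp abc n1p n2p a_def b_def by auto
  next
    assume h: "\<rho> > 1 \<and> 1 / sqrt \<rho> < cos \<phi> \<and> cos \<phi> < 1"
    have bc: "b \<le> c" using h n1p n2p unfolding cosphi sq b_def by (simp add: field_simps power2_eq_square)
    show "10 * log 10 (SNR_md P \<sigma>2 h1 h2 / SNR_zf P \<sigma>2 h1 h2) = 10 * log 10 ((1 + 1 / \<rho>) / (1 - (cos \<phi>)\<^sup>2))"
      apply (rule ratio)
      apply (unfold md_2[OF bc] zf rhoab cosphi)
    proof -
      have "(P*b/\<sigma>2) / (P*D/(\<sigma>2*(b+a))) = (1 + b/a)/(1 - (c/(n2*n1))^2)"
        by (rule r_one[of n2 n1 b a D c P \<sigma>2])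
           (use P \<sigma> Dp n1p n2p a_def b_def D_def in auto)
      then show "(P*b/\<sigma>2) / (P*D/(\<sigma>2*(a+b))) = (1 + 1/(a/b))/(1 - (c/(n1*n2))^2)"
        by (simp add: ac_simps)
    qed
  qed
qed

end
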